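(* Let $G$ be a torsion abelian group with $G=H+K$ for subgroups $H,K\leq G$, and let $\varphi\colon G\to G$ be an endomorphism with $\varphi H\subseteq H$ and $\varphi K\subseteq K$. If the restrictions $\varphi|_H\colon H\to H$ and $\varphi|_K\colon K\to K$ are positively expansive endomorphisms, then $\varphi$ is positively expansive. Analogously, if $\varphi$ is an automorphism whose restrictions $\varphi|_H$ and $\varphi|_K$ are expansive automorphisms of $H$ and $K$, then $\varphi$ is an expansive automorphism.
   Context: $\mathbb N=\{0,1,2,\dots\}$. An endomorphism $\varphi$ of an abelian group $G$ is positively expansive if there is a finite subgroup $S\leq G$ such that for every finite subgroup $F\leq G$ there is $n\in\mathbb N$ with $F\subseteq\sum_{k=0}^n\varphi^kS$. An automorphism $\varphi$ is expansive if there is a finite subgroup $S\leq G$ such that for every finite subgroup $F\leq G$ there is $n\in\mathbb N$ with $F\subseteq\sum_{|k|\leq n}\varphi^kS$. *)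

theory Defs
  imports Main
begin

text \<open>Abelian groups are realised as subgroups (carrier sets) of an ambient
  type of class ab_group_add; the whole group G is the ambient type (UNIV).\<close>

definition subgrp :: "'a::ab_group_add set \<Rightarrow> bool" where
  "subgrp A \<longleftrightarrow> 0 \<in> A \<and> (\<forall>x\<in>A. \<forall>y\<in>A. x + y \<in> A) \<and> (\<forall>x\<in>A. - x \<in> A)"

definition torsion_group :: "'a::ab_group_add set \<Rightarrow> bool" where
  "torsion_group A \<longleftrightarrow> (\<forall>x\<in>A. \<exists>n::nat. n > 0 \<and> (\<Sum>i<n. x) = 0)"

definition endo_on :: "'a::ab_group_add set \<Rightarrow> ('a \<Rightarrow> 'a) \<Rightarrow> bool" where
  "endo_on A f \<longleftrightarrow> f ` A \<subseteq> A \<and> (\<forall>x\<in>A. \<forall>y\<in>A. f (x + y) = f x + f y)"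

definition auto_on :: "'a::ab_group_add set \<Rightarrow> ('a \<Rightarrow> 'a) \<Rightarrow> bool" where
  "auto_on A f \<longleftrightarrow> endo_on A f \<and> bij_betw f A A"

definition ipow :: "'a set \<Rightarrow> ('a \<Rightarrow> 'a) \<Rightarrow> int \<Rightarrow> 'a \<Rightarrow> 'a" where
  "ipow A f k = (if k \<ge> 0 then f ^^ nat k else inv_into A f ^^ nat (- k))"

definition pos_orbit_sum :: "('a::ab_group_add \<Rightarrow> 'a) \<Rightarrow> 'a set \<Rightarrow> nat \<Rightarrow> 'a set" where
  "pos_orbit_sum f S n = {(\<Sum>k\<le>n. s k) | s. \<forall>k\<le>n. s k \<in> (f ^^ k) ` S}"

definition orbit_sum :: "'a::ab_group_add set \<Rightarrow> ('a \<Rightarrow> 'a) \<Rightarrow> 'a set \<Rightarrow> nat \<Rightarrow> 'a set" where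
  "orbit_sum A f S n = {(\<Sum>k\<in>{- int n..int n}. s k) | s. \<forall>k\<in>{- int n..int n}. s k \<in> ipow A f k ` S}"

definition pos_expansive :: "'a::ab_group_add set \<Rightarrow> ('a \<Rightarrow> 'a) \<Rightarrow> bool" where
  "pos_expansive A f \<longleftrightarrow> endo_on A f \<and>
     (\<exists>S. subgrp S \<and> finite S \<and> S \<subseteq> A \<and>
        (\<forall>F. subgrp F \<and> finite F \<and> F \<subseteq> A \<longrightarrow> (\<exists>n. F \<subseteq> pos_orbit_sum f S n)))"

definition expansive :: "'a::ab_group_add set \<Rightarrow> ('a \<Rightarrow> 'a) \<Rightarrow> bool" where
  "expansive A f \<longleftrightarrow> auto_on A f \<and>
     (\<exists>S. subgrp S \<and> finite S \<and> S \<subseteq> A \<and>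
        (\<forall>F. subgrp F \<and> finite F \<and> F \<subseteq> A \<longrightarrow> (\<exists>n. F \<subseteq> orbit_sum A f S n)))"

end

theory Submission
  imports Defs "HOL-Library.FuncSet"
begin

definition nm :: "nat \<Rightarrow> 'a::ab_group_add \<Rightarrow> 'a" where
  "nm m x = (\<Sum>i<m. x)"

definition additive :: "('a::ab_group_add \<Rightarrow> 'a) \<Rightarrow> bool" where
  "additive g \<longleftrightarrow> (\<forall>x y. g (x + y) = g x + g y)"

definition OS :: "'i set \<Rightarrow> ('i \<Rightarrow> 'a::ab_group_add \<Rightarrow> 'a) \<Rightarrow> 'a set \<Rightarrow> 'a set" where
  "OS I g S = {(\<Sum>k\<in>I. s k) | s. \<forall>k\<in>I. s k \<in> g k ` S}"

definition SS :: "'a::ab_group_add set \<Rightarrow> 'a set \<Rightarrow> 'a set" where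
  "SS A B = {a + b | a b. a \<in> A \<and> b \<in> B}"

lemma nm_0[simp]: "nm 0 x = 0" by (simp add: nm_def)
lemma nm_Suc: "nm (Suc m) x = nm m x + x" by (simp add: nm_def)
lemma nm_1[simp]: "nm 1 x = x" by (simp add: nm_def)
lemma nm_Suc0[simp]: "nm (Suc 0) x = x" by (simp add: nm_def)

lemma nm_add: "nm (a + b) x = nm a x + nm b x"
  by (induction b) (simp_all add: nm_Suc add.assoc)

lemma nm_mult: "nm (a * b) x = nm a (nm b x)"
  by (induction a) (simp_all add: nm_Suc nm_add add.commute)

lemma nm_zero[simp]: "nm m (0::'a::ab_group_add) = 0" by (simp add: nm_def)

lemma nm_distrib: "nm m (x + y) = nm m x + nm m y"
  by (simp add: nm_def sum.distrib)

lemma subgrp_sum: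
  assumes "subgrp H" "\<And>i. i \<in> I \<Longrightarrow> f i \<in> H"
  shows "sum f I \<in> H"
  using assms(2)
proof (induction I rule: infinite_finite_induct)
  case (infinite A) then show ?case using assms(1) by (simp add: subgrp_def)
next
  case empty then show ?case using assms(1) by (simp add: subgrp_def)
next
  case (insert x F) then show ?case using assms(1) by (simp add: subgrp_def)
qed

lemma subgrp_nm: "subgrp H \<Longrightarrow> x \<in> H \<Longrightarrow> nm m x \<in> H"
  unfolding nm_def by (rule subgrp_sum) auto

lemma common_order:
  assumes "finite B" "\<And>b. b \<in> B \<Longrightarrow> \<exists>n>0. nm n b = 0"
  shows "\<exists>N>0. \<forall>b\<in>B. nm N b = 0"
  using assms
proof (induction B rule: finite_induct)
  case empty then show ?case by (intro exI[of _ 1]) auto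
next
  case (insert x F)
  then obtain N where N: "N > 0" "\<forall>b\<in>F. nm N b = 0" by auto
  obtain n where n: "n > 0" "nm n x = 0" using insert by auto
  have "\<forall>b\<in>insert x F. nm (n * N) b = 0"
    using N n by (auto simp: nm_mult) (metis mult.commute nm_mult nm_zero)
  then show ?case using N n by (intro exI[of _ "n * N"]) auto
qed

lemma gen_finite:
  assumes tor: "torsion_group (UNIV :: 'a::ab_group_add set)" and H: "subgrp H"
    and B: "finite B" "B \<subseteq> H"
  shows "\<exists>E. subgrp E \<and> finite E \<and> B \<subseteq> E \<and> E \<subseteq> (H::'a set)"
proof -
  obtain N where N: "N > 0" "\<forall>b\<in>B. nm N b = 0"
    using common_order[OF B(1)] tor unfolding torsion_group_def nm_def by auto
  have Nq: "nm (N * q) b = 0" if "b \<in> B" for q b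
    using N that by (metis mult.commute nm_mult nm_zero)
  have red: "nm c b = nm (c mod N) b" if "b \<in> B" for c b
  proof -
    have "nm c b = nm (N * (c div N)) b + nm (c mod N) b"
      by (metis div_mult_mod_eq mult.commute nm_add)
    then show ?thesis using Nq[OF that] by simp
  qed
  define E where "E = {(\<Sum>b\<in>B. nm (c b) b) | c. True}"
  have "E \<subseteq> (\<lambda>c. \<Sum>b\<in>B. nm (c b) b) ` (B \<rightarrow>\<^sub>E {..<N})"
  proof
    fix x assume "x \<in> E"
    then obtain c where x: "x = (\<Sum>b\<in>B. nm (c b) b)" by (auto simp: E_def)
    define c' where "c' = (\<lambda>b. if b \<in> B then c b mod N else undefined)"
    have "c' \<in> B \<rightarrow>\<^sub>E {..<N}" using N by (auto simp: c'_def)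
    moreover have "x = (\<Sum>b\<in>B. nm (c' b) b)"
      unfolding x
    proof (rule sum.cong)
      fix b assume "b \<in> B"
      then show "nm (c b) b = nm (c' b) b" using red[of b "c b"] by (simp add: c'_def)
    qed simp
    ultimately show "x \<in> (\<lambda>c. \<Sum>b\<in>B. nm (c b) b) ` (B \<rightarrow>\<^sub>E {..<N})" by blast
  qed
  then have fin: "finite E"
    by (rule finite_subset) (intro finite_imageI finite_PiE B(1); simp)
  have sub: "subgrp E"
    unfolding subgrp_def
  proof (intro conjI ballI)
    show "0 \<in> E" unfolding E_def by (intro CollectI exI[of _ "\<lambda>_. 0"]) simp
  next
    fix x y assume "x \<in> E" "y \<in> E"
    then obtain c d where "x = (\<Sum>b\<in>B. nm (c b) b)" "y = (\<Sum>b\<in>B. nm (d b) b)"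
      by (auto simp: E_def)
    then have "x + y = (\<Sum>b\<in>B. nm (c b + d b) b)" by (simp add: nm_add sum.distrib)
    then show "x + y \<in> E" unfolding E_def by (intro CollectI exI[of _ "\<lambda>b. c b + d b"]) simp
  next
    fix x assume "x \<in> E"
    then obtain c where x: "x = (\<Sum>b\<in>B. nm (c b) b)" by (auto simp: E_def)
    have "nm ((N - 1) * c b) b = - nm (c b) b" if "b \<in> B" for b
    proof -
      have "(N - 1) * c b + c b = N * c b" using N by (cases N) auto
      then have "nm ((N - 1) * c b) b + nm (c b) b = 0"
        using Nq[OF that] by (metis nm_add)
      then show ?thesis by (simp add: eq_neg_iff_add_eq_0)
    qed
    then have "- x = (\<Sum>b\<in>B. nm ((N - 1) * c b) b)"
      unfolding x by (simp add: sum_negf[symmetric])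
    then show "- x \<in> E" unfolding E_def by (intro CollectI exI[of _ "\<lambda>b. (N - 1) * c b"]) simp
  qed
  have "B \<subseteq> E"
  proof
    fix b assume b: "b \<in> B"
    have "(\<Sum>b'\<in>B. nm (if b' = b then 1 else 0) b') = (\<Sum>b'\<in>B. if b' = b then b else 0)"
      by (rule sum.cong) auto
    also have "\<dots> = b" using b B(1) by simp
    finally show "b \<in> E" unfolding E_def by (intro CollectI exI[of _ "\<lambda>b'. if b' = b then 1 else 0"]) simp
  qed
  moreover have "E \<subseteq> H"
    unfolding E_def using B(2) by (auto intro!: subgrp_sum[OF H] subgrp_nm[OF H])
  ultimately show ?thesis using fin sub by blast
qed

lemma decomp:
  assumes tor: "torsion_group (UNIV :: 'a::ab_group_add set)"
    and H: "subgrp H" and K: "subgrp K"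
    and HK: "{h + k | h k. h \<in> H \<and> k \<in> K} = (UNIV :: 'a set)"
    and F: "finite F"
  shows "\<exists>FH FK. subgrp FH \<and> finite FH \<and> FH \<subseteq> H \<and> subgrp FK \<and> finite FK \<and> FK \<subseteq> K
            \<and> F \<subseteq> SS FH FK"
proof -
  have "\<forall>x. \<exists>p. fst p \<in> H \<and> snd p \<in> K \<and> x = fst p + snd p"
  proof
    fix x :: 'a
    have "x \<in> {h + k | h k. h \<in> H \<and> k \<in> K}" using HK by simp
    then show "\<exists>p. fst p \<in> H \<and> snd p \<in> K \<and> x = fst p + snd p" by force
  qed
  then obtain p where p: "\<And>x. fst (p x) \<in> H \<and> snd (p x) \<in> K \<and> x = fst (p x) + snd (p x)"
    by metis
  obtain FH where FH: "subgrp FH" "finite FH" "(\<lambda>x. fst (p x)) ` F \<subseteq> FH" "FH \<subseteq> H"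
    using gen_finite[OF tor H, of "(\<lambda>x. fst (p x)) ` F"] F p by blast
  obtain FK where FK: "subgrp FK" "finite FK" "(\<lambda>x. snd (p x)) ` F \<subseteq> FK" "FK \<subseteq> K"
    using gen_finite[OF tor K, of "(\<lambda>x. snd (p x)) ` F"] F p by blast
  have "F \<subseteq> SS FH FK"
  proof
    fix x assume "x \<in> F"
    then show "x \<in> SS FH FK" unfolding SS_def using FH(3) FK(3) p[of x] by blast
  qed
  then show ?thesis using FH FK by blast
qed

lemma SS_I: "a \<in> A \<Longrightarrow> b \<in> B \<Longrightarrow> x = a + b \<Longrightarrow> x \<in> SS A B"
  unfolding SS_def by blast

lemma SS_E: "x \<in> SS A B \<Longrightarrow> (\<And>a b. a \<in> A \<Longrightarrow> b \<in> B \<Longrightarrow> x = a + b \<Longrightarrow> P) \<Longrightarrow> P"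
  unfolding SS_def by blast

lemma SS_subgrp:
  assumes "subgrp A" "subgrp B" "finite A" "finite B"
  shows "subgrp (SS A B) \<and> finite (SS A B)"
proof
  show "finite (SS A B)" unfolding SS_def
    using assms by (intro finite_image_set2) auto
  have A: "0 \<in> A" "\<And>x y. x \<in> A \<Longrightarrow> y \<in> A \<Longrightarrow> x + y \<in> A" "\<And>x. x \<in> A \<Longrightarrow> - x \<in> A"
    using assms(1) unfolding subgrp_def by auto
  have B: "0 \<in> B" "\<And>x y. x \<in> B \<Longrightarrow> y \<in> B \<Longrightarrow> x + y \<in> B" "\<And>x. x \<in> B \<Longrightarrow> - x \<in> B"
    using assms(2) unfolding subgrp_def by auto
  show "subgrp (SS A B)"
    unfolding subgrp_def
  proof (intro conjI ballI)
    show "0 \<in> SS A B" by (rule SS_I[OF A(1) B(1)]) simp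
  next
    fix x y assume "x \<in> SS A B" "y \<in> SS A B"
    then obtain a b a' b' where "x = a + b" "y = a' + b'" "a \<in> A" "b \<in> B" "a' \<in> A" "b' \<in> B"
      by (metis SS_E)
    then show "x + y \<in> SS A B"
      by (intro SS_I[OF A(2) B(2), of a a' b b']) (simp_all add: algebra_simps)
  next
    fix x assume "x \<in> SS A B"
    then obtain a b where "x = a + b" "a \<in> A" "b \<in> B" by (metis SS_E)
    then show "- x \<in> SS A B"
      by (intro SS_I[OF A(3) B(3), of a b]) simp_all
  qed
qed

lemma SS_sub: "A \<subseteq> U \<Longrightarrow> B \<subseteq> U \<Longrightarrow> subgrp U \<Longrightarrow> SS A B \<subseteq> U"
  unfolding SS_def subgrp_def by blast

lemma OS_mono:
  assumes "I \<subseteq> J" "finite J" "\<And>k. k \<in> J \<Longrightarrow> g k 0 = 0" "0 \<in> S"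
  shows "OS I g S \<subseteq> OS J g S"
proof
  fix x assume "x \<in> OS I g S"
  then obtain s where x: "x = (\<Sum>k\<in>I. s k)" and s: "\<forall>k\<in>I. s k \<in> g k ` S"
    by (auto simp: OS_def)
  define s' where "s' = (\<lambda>k. if k \<in> I then s k else 0)"
  have "(\<Sum>k\<in>J. s' k) = (\<Sum>k\<in>J \<inter> I. s k)"
    unfolding s'_def using assms(2) by (simp add: sum.inter_restrict)
  also have "J \<inter> I = I" using assms(1) by blast
  finally have "x = (\<Sum>k\<in>J. s' k)" using x by simp
  moreover have "\<forall>k\<in>J. s' k \<in> g k ` S"
  proof
    fix k assume k: "k \<in> J"
    show "s' k \<in> g k ` S"
    proof (cases "k \<in> I")
      case True then show ?thesis using s by (simp add: s'_def)
    next
      case False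
      then have "s' k = g k 0" using assms(3)[OF k] by (simp add: s'_def)
      then show ?thesis using assms(4) by blast
    qed
  qed
  ultimately show "x \<in> OS J g S" unfolding OS_def by blast
qed

lemma OS_add:
  assumes "\<And>k. k \<in> I \<Longrightarrow> additive (g k)"
    and "x \<in> OS I g A" "y \<in> OS I g B"
  shows "x + y \<in> OS I g (SS A B)"
proof -
  obtain s where x: "x = (\<Sum>k\<in>I. s k)" and s: "\<forall>k\<in>I. s k \<in> g k ` A"
    using assms(2) by (auto simp: OS_def)
  obtain t where y: "y = (\<Sum>k\<in>I. t k)" and t: "\<forall>k\<in>I. t k \<in> g k ` B"
    using assms(3) by (auto simp: OS_def)
  have "x + y = (\<Sum>k\<in>I. s k + t k)" using x y by (simp add: sum.distrib)
  moreover have "\<forall>k\<in>I. s k + t k \<in> g k ` SS A B"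
  proof
    fix k assume k: "k \<in> I"
    obtain a b where "a \<in> A" "b \<in> B" "s k = g k a" "t k = g k b" using s t k by blast
    moreover have "g k (a + b) = g k a + g k b" using assms(1)[OF k] by (simp add: additive_def)
    ultimately show "s k + t k \<in> g k ` SS A B" unfolding SS_def by force
  qed
  ultimately show ?thesis unfolding OS_def by blast
qed

lemma additive_0: "additive g \<Longrightarrow> g 0 = 0"
  unfolding additive_def by (metis add_cancel_right_right add_0)

lemma additive_pow: "additive g \<Longrightarrow> additive (g ^^ n)"
  by (induction n) (auto simp: additive_def)

lemma additive_inv:
  assumes "additive g" "bij g"
  shows "additive (inv_into UNIV g)"
  unfolding additive_def
proof (intro allI)
  fix x y
  have "g (inv_into UNIV g x + inv_into UNIV g y) = x + y"
    using assms by (simp add: additive_def bij_is_surj surj_f_inv_f)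
  then show "inv_into UNIV g (x + y) = inv_into UNIV g x + inv_into UNIV g y"
    using assms(2) by (metis bij_is_inj inv_f_f)
qed

lemma additive_ipow:
  assumes "additive g" "bij g"
  shows "additive (ipow UNIV g k)"
  unfolding ipow_def using assms additive_pow additive_inv by auto

lemma ipow_restrict_aux:
  assumes "bij g" "bij_betw g H H" "h \<in> H"
  shows "(inv_into H g ^^ m) h = (inv_into UNIV g ^^ m) h \<and> (inv_into H g ^^ m) h \<in> H"
proof (induction m)
  case 0 then show ?case using assms by simp
next
  case (Suc m)
  define y where "y = (inv_into H g ^^ m) h"
  have y: "y \<in> H" "(inv_into UNIV g ^^ m) h = y" using Suc y_def by auto
  have yi: "y \<in> g ` H" using y assms(2) by (simp add: bij_betw_imp_surj_on)
  define z where "z = inv_into H g y"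
  have z: "z \<in> H" "g z = y" using yi by (auto simp: z_def inv_into_into f_inv_into_f)
  have "inv_into UNIV g y = z" using z assms(1) by (metis bij_is_inj inv_f_f)
  then show ?case using y z by (simp add: y_def z_def)
qed

lemma ipow_restrict:
  assumes "bij g" "bij_betw g H H" "h \<in> H"
  shows "ipow H g k h = ipow UNIV g k h"
  unfolding ipow_def using ipow_restrict_aux[OF assms] by simp

lemma orbit_sum_OS: "orbit_sum A f S n = OS {- int n..int n} (ipow A f) S"
  unfolding orbit_sum_def OS_def by simp

lemma pos_orbit_sum_OS: "pos_orbit_sum f S n = OS {..n} (\<lambda>k. f ^^ k) S"
  unfolding pos_orbit_sum_def OS_def by (simp only: Ball_def atMost_iff)

lemma OS_cong: "(\<And>k. k \<in> I \<Longrightarrow> g k ` S = g' k ` S) \<Longrightarrow> OS I g S = OS I g' S"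
  unfolding OS_def by auto

theorem proposition2p8:
  fixes H K :: "'a::ab_group_add set" and \<phi> :: "'a \<Rightarrow> 'a"
  assumes "torsion_group (UNIV :: 'a set)"
    and "subgrp H" and "subgrp K"
    and "{h + k | h k. h \<in> H \<and> k \<in> K} = UNIV"
    and "\<phi> ` H \<subseteq> H" and "\<phi> ` K \<subseteq> K"
  shows "(endo_on UNIV \<phi> \<and> pos_expansive H \<phi> \<and> pos_expansive K \<phi> \<longrightarrow> pos_expansive UNIV \<phi>)
       \<and> (auto_on UNIV \<phi> \<and> expansive H \<phi> \<and> expansive K \<phi> \<longrightarrow> expansive UNIV \<phi>)"
proof (intro conjI impI)
  assume A: "endo_on UNIV \<phi> \<and> pos_expansive H \<phi> \<and> pos_expansive K \<phi>"
  have add: "additive \<phi>" using A by (simp add: endo_on_def additive_def)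
  have addk: "additive (\<phi> ^^ k)" for k using additive_pow[OF add] .
  have "\<exists>SH. subgrp SH \<and> finite SH \<and> SH \<subseteq> H \<and>
    (\<forall>F. subgrp F \<and> finite F \<and> F \<subseteq> H \<longrightarrow> (\<exists>n. F \<subseteq> pos_orbit_sum \<phi> SH n))"
    using A unfolding pos_expansive_def by (elim conjE) assumption
  then obtain SH where SH': "subgrp SH \<and> finite SH \<and> SH \<subseteq> H \<and>
    (\<forall>F. subgrp F \<and> finite F \<and> F \<subseteq> H \<longrightarrow> (\<exists>n. F \<subseteq> pos_orbit_sum \<phi> SH n))" ..
  then have SH: "subgrp SH" "finite SH" "SH \<subseteq> H"
    "\<And>F. subgrp F \<and> finite F \<and> F \<subseteq> H \<Longrightarrow> \<exists>n. F \<subseteq> pos_orbit_sum \<phi> SH n"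
    by auto
  have "\<exists>SK. subgrp SK \<and> finite SK \<and> SK \<subseteq> K \<and>
    (\<forall>F. subgrp F \<and> finite F \<and> F \<subseteq> K \<longrightarrow> (\<exists>n. F \<subseteq> pos_orbit_sum \<phi> SK n))"
    using A unfolding pos_expansive_def by (elim conjE) assumption
  then obtain SK where SK': "subgrp SK \<and> finite SK \<and> SK \<subseteq> K \<and>
    (\<forall>F. subgrp F \<and> finite F \<and> F \<subseteq> K \<longrightarrow> (\<exists>n. F \<subseteq> pos_orbit_sum \<phi> SK n))" ..
  then have SK: "subgrp SK" "finite SK" "SK \<subseteq> K"
    "\<And>F. subgrp F \<and> finite F \<and> F \<subseteq> K \<Longrightarrow> \<exists>n. F \<subseteq> pos_orbit_sum \<phi> SK n"
    by auto
  have mono: "pos_orbit_sum \<phi> S n \<subseteq> pos_orbit_sum \<phi> S m" if "n \<le> m" "0 \<in> S" for S n m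
    unfolding pos_orbit_sum_OS using that
    by (intro OS_mono) (auto simp: additive_0[OF addk])
  show "pos_expansive UNIV \<phi>"
    unfolding pos_expansive_def
  proof (intro conjI exI[of _ "SS SH SK"] allI impI)
    show "endo_on UNIV \<phi>" using A by simp
    show "subgrp (SS SH SK)" "finite (SS SH SK)" using SS_subgrp[OF SH(1) SK(1) SH(2) SK(2)] by simp_all
    show "SS SH SK \<subseteq> UNIV" by simp
    fix F :: "'a set" assume F: "subgrp F \<and> finite F \<and> F \<subseteq> UNIV"
    obtain FH FK where FF: "subgrp FH" "finite FH" "FH \<subseteq> H" "subgrp FK" "finite FK" "FK \<subseteq> K"
      "F \<subseteq> SS FH FK"
      using decomp[OF assms(1-4), of F] F by blast
    obtain n1 where n1: "FH \<subseteq> pos_orbit_sum \<phi> SH n1" using SH(4) FF by blast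
    obtain n2 where n2: "FK \<subseteq> pos_orbit_sum \<phi> SK n2" using SK(4) FF by blast
    have "F \<subseteq> pos_orbit_sum \<phi> (SS SH SK) (max n1 n2)"
    proof
      fix x assume "x \<in> F"
      then obtain a b where ab: "x = a + b" "a \<in> FH" "b \<in> FK" using FF(7) by (auto simp: SS_def)
      have "a \<in> pos_orbit_sum \<phi> SH (max n1 n2)"
        using ab n1 mono[of n1 "max n1 n2" SH] SH(1) by (auto simp: subgrp_def)
      moreover have "b \<in> pos_orbit_sum \<phi> SK (max n1 n2)"
        using ab n2 mono[of n2 "max n1 n2" SK] SK(1) by (auto simp: subgrp_def)
      ultimately show "x \<in> pos_orbit_sum \<phi> (SS SH SK) (max n1 n2)"
        unfolding pos_orbit_sum_OS ab(1) by (intro OS_add addk)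
    qed
    then show "\<exists>n. F \<subseteq> pos_orbit_sum \<phi> (SS SH SK) n" by blast
  qed
next
  assume A: "auto_on UNIV \<phi> \<and> expansive H \<phi> \<and> expansive K \<phi>"
  have add: "additive \<phi>" using A by (simp add: auto_on_def endo_on_def additive_def)
  have bij: "bij \<phi>" using A by (simp add: auto_on_def)
  have addk: "additive (ipow UNIV \<phi> k)" for k using additive_ipow[OF add bij] .
  have restr: "orbit_sum U \<phi> S n = orbit_sum UNIV \<phi> S n"
    if "auto_on U \<phi>" "S \<subseteq> U" for U S n
    unfolding orbit_sum_OS
  proof (rule OS_cong)
    fix k
    have "bij_betw \<phi> U U" using that by (simp add: auto_on_def)
    then show "ipow U \<phi> k ` S = ipow UNIV \<phi> k ` S"
      using ipow_restrict[OF bij] that(2) by (intro image_cong) auto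
  qed
  have aH: "auto_on H \<phi>" and aK: "auto_on K \<phi>" using A by (simp_all add: expansive_def)
  have "\<exists>SH. subgrp SH \<and> finite SH \<and> SH \<subseteq> H \<and>
    (\<forall>F. subgrp F \<and> finite F \<and> F \<subseteq> H \<longrightarrow> (\<exists>n. F \<subseteq> orbit_sum H \<phi> SH n))"
    using A unfolding expansive_def by (elim conjE) assumption
  then obtain SH where SH': "subgrp SH \<and> finite SH \<and> SH \<subseteq> H \<and>
    (\<forall>F. subgrp F \<and> finite F \<and> F \<subseteq> H \<longrightarrow> (\<exists>n. F \<subseteq> orbit_sum H \<phi> SH n))" ..
  then have SH: "subgrp SH" "finite SH" "SH \<subseteq> H"
    "\<And>F. subgrp F \<and> finite F \<and> F \<subseteq> H \<Longrightarrow> \<exists>n. F \<subseteq> orbit_sum UNIV \<phi> SH n"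
    using restr[OF aH] by auto
  have "\<exists>SK. subgrp SK \<and> finite SK \<and> SK \<subseteq> K \<and>
    (\<forall>F. subgrp F \<and> finite F \<and> F \<subseteq> K \<longrightarrow> (\<exists>n. F \<subseteq> orbit_sum K \<phi> SK n))"
    using A unfolding expansive_def by (elim conjE) assumption
  then obtain SK where SK': "subgrp SK \<and> finite SK \<and> SK \<subseteq> K \<and>
    (\<forall>F. subgrp F \<and> finite F \<and> F \<subseteq> K \<longrightarrow> (\<exists>n. F \<subseteq> orbit_sum K \<phi> SK n))" ..
  then have SK: "subgrp SK" "finite SK" "SK \<subseteq> K"
    "\<And>F. subgrp F \<and> finite F \<and> F \<subseteq> K \<Longrightarrow> \<exists>n. F \<subseteq> orbit_sum UNIV \<phi> SK n"
    using restr[OF aK] by auto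
  have mono: "orbit_sum UNIV \<phi> S n \<subseteq> orbit_sum UNIV \<phi> S m" if "n \<le> m" "0 \<in> S" for S n m
    unfolding orbit_sum_OS using that
    by (intro OS_mono) (auto simp: additive_0[OF addk])
  show "expansive UNIV \<phi>"
    unfolding expansive_def
  proof (intro conjI exI[of _ "SS SH SK"] allI impI)
    show "auto_on UNIV \<phi>" using A by simp
    show "subgrp (SS SH SK)" "finite (SS SH SK)" using SS_subgrp[OF SH(1) SK(1) SH(2) SK(2)] by simp_all
    show "SS SH SK \<subseteq> UNIV" by simp
    fix F :: "'a set" assume F: "subgrp F \<and> finite F \<and> F \<subseteq> UNIV"
    obtain FH FK where FF: "subgrp FH" "finite FH" "FH \<subseteq> H" "subgrp FK" "finite FK" "FK \<subseteq> K"
      "F \<subseteq> SS FH FK"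
      using decomp[OF assms(1-4), of F] F by blast
    obtain n1 where n1: "FH \<subseteq> orbit_sum UNIV \<phi> SH n1" using SH(4) FF by blast
    obtain n2 where n2: "FK \<subseteq> orbit_sum UNIV \<phi> SK n2" using SK(4) FF by blast
    have "F \<subseteq> orbit_sum UNIV \<phi> (SS SH SK) (max n1 n2)"
    proof
      fix x assume "x \<in> F"
      then obtain a b where ab: "x = a + b" "a \<in> FH" "b \<in> FK" using FF(7) by (auto simp: SS_def)
      have "a \<in> orbit_sum UNIV \<phi> SH (max n1 n2)"
        using ab n1 mono[of n1 "max n1 n2" SH] SH(1) by (auto simp: subgrp_def)
      moreover have "b \<in> orbit_sum UNIV \<phi> SK (max n1 n2)"
        using ab n2 mono[of n2 "max n1 n2" SK] SK(1) by (auto simp: subgrp_def)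
      ultimately show "x \<in> orbit_sum UNIV \<phi> (SS SH SK) (max n1 n2)"
        unfolding orbit_sum_OS ab(1) by (intro OS_add addk)
    qed
    then show "\<exists>n. F \<subseteq> orbit_sum UNIV \<phi> (SS SH SK) n" by blast
  qed
qed

end
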